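(* Let $F\colon\mathbb{R}^m\to\mathscr{P}(\mathbb{R}^n)$ be a multifunction definable in a polynomially bounded o-minimal structure, with closed graph $\Gamma_F$. Then for any $a\in\mathrm{dom}\,F$ and $y\in F(a)$ there exist a neighbourhood $U$ of $(a,y)$ and constants $C,\ell>0$ such that $$\|v-y\|\geq C\,d\big(x,(\Gamma_F)_y\big)^\ell,\qquad (x,v)\in\Gamma_F\cap U,$$ where $(\Gamma_F)_y=\{x\in\mathbb{R}^m\mid y\in F(x)\}$.
   Context: Definable multifunction: a definable set $\Gamma_F\subset\mathbb{R}^m\times\mathbb{R}^n$ with $F(x)=\{y\mid (x,y)\in\Gamma_F\}$, $\mathrm{dom}\,F=\{x\mid F(x)\neq\varnothing\}$. An o-minimal structure is polynomially bounded if every definable function $\mathbb{R}\to\mathbb{R}$ is bounded at $+\infty$ by some power $x^N$. *)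

theory Defs
  imports "HOL-Analysis.Analysis"
begin

text \<open>A structure on the real field: a family S n of subsets of R^n, where R^n is
  represented by real lists of length n (van den Dries' axioms).\<close>
definition structure_on_R :: "(nat \<Rightarrow> real list set set) \<Rightarrow> bool" where
  "structure_on_R S \<longleftrightarrow>
     (\<forall>n. \<forall>A\<in>S n. A \<subseteq> {xs. length xs = n}) \<and>
     (\<forall>n. {} \<in> S n) \<and>
     (\<forall>n A B. A \<in> S n \<longrightarrow> B \<in> S n \<longrightarrow> A \<union> B \<in> S n) \<and>
     (\<forall>n A. A \<in> S n \<longrightarrow> {xs. length xs = n} - A \<in> S n) \<and>
     (\<forall>n A. A \<in> S n \<longrightarrow> {xs @ [r] | xs r. xs \<in> A} \<in> S (Suc n)) \<and>
     (\<forall>n A. A \<in> S n \<longrightarrow> {r # xs | xs r. xs \<in> A} \<in> S (Suc n)) \<and>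
     (\<forall>n i j. i < n \<longrightarrow> j < n \<longrightarrow> {xs. length xs = n \<and> xs ! i = xs ! j} \<in> S n) \<and>
     (\<forall>n A. A \<in> S (Suc n) \<longrightarrow> butlast ` A \<in> S n) \<and>
     {[x, y] | x y. x < y} \<in> S 2 \<and>
     (\<forall>r. {[r]} \<in> S 1) \<and>
     {[x, y, x + y] | x y. True} \<in> S 3 \<and>
     {[x, y, x * y] | x y. True} \<in> S 3"

definition o_minimal :: "(nat \<Rightarrow> real list set set) \<Rightarrow> bool" where
  "o_minimal S \<longleftrightarrow> structure_on_R S \<and>
     (\<forall>A\<in>S 1. \<exists>P :: (ereal \<times> ereal) set. \<exists>F :: real set. finite P \<and> finite F \<and>
        A = {[x] | x. (\<exists>(a, b)\<in>P. a < ereal x \<and> ereal x < b) \<or> x \<in> F})"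

definition polynomially_bounded :: "(nat \<Rightarrow> real list set set) \<Rightarrow> bool" where
  "polynomially_bounded S \<longleftrightarrow> o_minimal S \<and>
     (\<forall>f :: real \<Rightarrow> real. {[x, f x] | x. True} \<in> S 2 \<longrightarrow>
        (\<exists>N :: nat. \<exists>x0. \<forall>x > x0. \<bar>f x\<bar> \<le> x ^ N))"

definition coords :: "real ^ ('m::{finite,linorder}) \<Rightarrow> real list" where
  "coords x = map (\<lambda>i. x $ i) (sorted_list_of_set (UNIV :: 'm set))"

definition definable_graph ::
  "(nat \<Rightarrow> real list set set) \<Rightarrow> ((real ^ ('m::{finite,linorder})) \<times> (real ^ ('n::{finite,linorder}))) set \<Rightarrow> bool" where
  "definable_graph S G \<longleftrightarrow> {coords x @ coords y | x y. (x, y) \<in> G} \<in> S (CARD('m) + CARD('n))"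

end

theory Submission
  imports Defs
begin


definition dfn :: "(nat \<Rightarrow> real list set set) \<Rightarrow> nat \<Rightarrow> (real list \<Rightarrow> bool) \<Rightarrow> bool" where
  "dfn S n P \<longleftrightarrow> {xs. length xs = n \<and> P xs} \<in> S n"

locale str = fixes S assumes str: "structure_on_R S"
begin

lemmas A0 = str[unfolded structure_on_R_def]
lemmas ax_sub = A0[THEN conjunct1]
lemmas ax_empty = A0[THEN conjunct2, THEN conjunct1]
lemmas ax_un = A0[THEN conjunct2, THEN conjunct2, THEN conjunct1]
lemmas ax_compl = A0[THEN conjunct2, THEN conjunct2, THEN conjunct2, THEN conjunct1]
lemmas ax_snoc = A0[THEN conjunct2, THEN conjunct2, THEN conjunct2, THEN conjunct2, THEN conjunct1]
lemmas ax_cons = A0[THEN conjunct2, THEN conjunct2, THEN conjunct2, THEN conjunct2, THEN conjunct2, THEN conjunct1]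
lemmas ax_eq = A0[THEN conjunct2, THEN conjunct2, THEN conjunct2, THEN conjunct2, THEN conjunct2, THEN conjunct2, THEN conjunct1]
lemmas ax_proj = A0[THEN conjunct2, THEN conjunct2, THEN conjunct2, THEN conjunct2, THEN conjunct2, THEN conjunct2, THEN conjunct2, THEN conjunct1]
lemmas ax_lt = A0[THEN conjunct2, THEN conjunct2, THEN conjunct2, THEN conjunct2, THEN conjunct2, THEN conjunct2, THEN conjunct2, THEN conjunct2, THEN conjunct1]
lemmas ax_const = A0[THEN conjunct2, THEN conjunct2, THEN conjunct2, THEN conjunct2, THEN conjunct2, THEN conjunct2, THEN conjunct2, THEN conjunct2, THEN conjunct2, THEN conjunct1]
lemmas ax_add = A0[THEN conjunct2, THEN conjunct2, THEN conjunct2, THEN conjunct2, THEN conjunct2, THEN conjunct2, THEN conjunct2, THEN conjunct2, THEN conjunct2, THEN conjunct2, THEN conjunct1]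
lemmas ax_mul = A0[THEN conjunct2, THEN conjunct2, THEN conjunct2, THEN conjunct2, THEN conjunct2, THEN conjunct2, THEN conjunct2, THEN conjunct2, THEN conjunct2, THEN conjunct2, THEN conjunct2]

lemma sub: "A \<in> S n \<Longrightarrow> A \<subseteq> {xs. length xs = n}"
  using ax_sub by blast

lemma dfn_cong: "(\<And>xs. length xs = n \<Longrightarrow> P xs = Q xs) \<Longrightarrow> dfn S n P \<Longrightarrow> dfn S n Q"
proof -
  assume a: "\<And>xs. length xs = n \<Longrightarrow> P xs = Q xs" and d: "dfn S n P"
  have e: "{xs. length xs = n \<and> P xs} = {xs. length xs = n \<and> Q xs}" using a by auto
  show ?thesis using d e unfolding dfn_def by (rule back_subst)
qed

lemma dfn_True: "dfn S n (\<lambda>_. True)"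
proof -
  have "{xs. length xs = n} - {} \<in> S n" using ax_compl ax_empty by blast
  thus ?thesis unfolding dfn_def by simp
qed

lemma dfn_not: "dfn S n P \<Longrightarrow> dfn S n (\<lambda>xs. \<not> P xs)"
proof -
  assume "dfn S n P"
  hence "{xs. length xs = n} - {xs. length xs = n \<and> P xs} \<in> S n"
    using ax_compl unfolding dfn_def by blast
  moreover have "{xs. length xs = n} - {xs. length xs = n \<and> P xs} = {xs. length xs = n \<and> \<not> P xs}" by auto
  ultimately show ?thesis unfolding dfn_def by (rule back_subst)
qed

lemma dfn_or: "dfn S n P \<Longrightarrow> dfn S n Q \<Longrightarrow> dfn S n (\<lambda>xs. P xs \<or> Q xs)"
proof -
  assume "dfn S n P" "dfn S n Q"
  hence "{xs. length xs = n \<and> P xs} \<union> {xs. length xs = n \<and> Q xs} \<in> S n"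
    using ax_un unfolding dfn_def by blast
  moreover have "{xs. length xs = n \<and> P xs} \<union> {xs. length xs = n \<and> Q xs} = {xs. length xs = n \<and> (P xs \<or> Q xs)}" by auto
  ultimately show ?thesis unfolding dfn_def by (rule back_subst)
qed

lemma dfn_and: "dfn S n P \<Longrightarrow> dfn S n Q \<Longrightarrow> dfn S n (\<lambda>xs. P xs \<and> Q xs)"
proof -
  assume "dfn S n P" "dfn S n Q"
  hence "dfn S n (\<lambda>xs. \<not> (\<not> P xs \<or> \<not> Q xs))" by (intro dfn_not dfn_or) auto
  thus ?thesis by (rule dfn_cong[rotated]) auto
qed

lemma dfn_snoc: "dfn S n P \<Longrightarrow> dfn S (Suc n) (\<lambda>xs. P (butlast xs))"
proof -
  assume "dfn S n P"
  hence "{xs @ [r] | xs r. xs \<in> {xs. length xs = n \<and> P xs}} \<in> S (Suc n)"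
    using ax_snoc unfolding dfn_def by blast
  moreover have "{xs @ [r] | xs r. xs \<in> {xs. length xs = n \<and> P xs}} = {xs. length xs = Suc n \<and> P (butlast xs)}"
    (is "?L = ?R")
  proof (intro set_eqI iffI)
    fix zs assume "zs \<in> ?L" thus "zs \<in> ?R" by auto
  next
    fix zs assume zs: "zs \<in> ?R"
    obtain xs r where e: "zs = xs @ [r]" using zs by (cases zs rule: rev_cases) auto
    show "zs \<in> ?L" using zs unfolding e by auto
  qed
  ultimately show ?thesis unfolding dfn_def by (rule back_subst)
qed

lemma dfn_cons: "dfn S n P \<Longrightarrow> dfn S (Suc n) (\<lambda>xs. P (tl xs))"
proof -
  assume "dfn S n P"
  hence "{r # xs | xs r. xs \<in> {xs. length xs = n \<and> P xs}} \<in> S (Suc n)"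
    using ax_cons unfolding dfn_def by blast
  moreover have "{r # xs | xs r. xs \<in> {xs. length xs = n \<and> P xs}} = {xs. length xs = Suc n \<and> P (tl xs)}"
    (is "?L = ?R")
  proof (intro set_eqI iffI)
    fix zs assume "zs \<in> ?L" thus "zs \<in> ?R" by auto
  next
    fix zs assume zs: "zs \<in> ?R"
    obtain xs r where e: "zs = r # xs" using zs by (cases zs) auto
    show "zs \<in> ?L" using zs unfolding e by auto
  qed
  ultimately show ?thesis unfolding dfn_def by (rule back_subst)
qed

lemma dfn_proj: "dfn S (Suc n) P \<Longrightarrow> dfn S n (\<lambda>xs. \<exists>r. P (xs @ [r]))"
proof -
  assume "dfn S (Suc n) P"
  hence "butlast ` {xs. length xs = Suc n \<and> P xs} \<in> S n"
    using ax_proj unfolding dfn_def by blast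
  moreover have "butlast ` {xs. length xs = Suc n \<and> P xs} = {xs. length xs = n \<and> (\<exists>r. P (xs @ [r]))}"
    (is "?L = ?R")
  proof (intro set_eqI iffI)
    fix xs assume "xs \<in> ?L"
    then obtain zs where zs: "length zs = Suc n" "P zs" "xs = butlast zs" by auto
    obtain ys r where e: "zs = ys @ [r]" using zs by (cases zs rule: rev_cases) auto
    show "xs \<in> ?R" using zs unfolding e by auto
  next
    fix xs assume "xs \<in> ?R"
    then obtain r where r: "length xs = n" "P (xs @ [r])" by auto
    have "xs = butlast (xs @ [r])" by simp
    moreover have "xs @ [r] \<in> {xs. length xs = Suc n \<and> P xs}" using r by simp
    ultimately show "xs \<in> ?L" by (rule image_eqI)
  qed
  ultimately show ?thesis unfolding dfn_def by (rule back_subst)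
qed

lemma dfn_eq: "i < n \<Longrightarrow> j < n \<Longrightarrow> dfn S n (\<lambda>xs. xs ! i = xs ! j)"
  using ax_eq unfolding dfn_def by blast

lemma len2: "length xs = 2 \<Longrightarrow> \<exists>x y. xs = [x, y]"
  by (auto simp: length_Suc_conv numeral_2_eq_2)
lemma len3: "length xs = 3 \<Longrightarrow> \<exists>x y z. xs = [x, y, z]"
  by (auto simp: length_Suc_conv numeral_3_eq_3)

lemma dfn_lt: "dfn S 2 (\<lambda>xs. xs!0 < xs!1)"
proof -
  have "{[x, y] | x y. x < y} \<in> S 2" by (rule ax_lt)
  moreover have "{[x, y] | x y. (x::real) < y} = {xs. length xs = 2 \<and> xs!0 < xs!1}"
    (is "?L = ?R")
  proof (intro set_eqI iffI)
    fix zs assume "zs \<in> ?L" thus "zs \<in> ?R" by auto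
  next
    fix zs assume zs: "zs \<in> ?R"
    obtain x y where e: "zs = [x, y]" using len2[of zs] zs by auto
    show "zs \<in> ?L" using zs unfolding e by auto
  qed
  ultimately show ?thesis unfolding dfn_def by (rule back_subst)
qed

lemma dfn_const: "dfn S 1 (\<lambda>xs. xs!0 = r)"
proof -
  have "{[r]} \<in> S 1" using ax_const by blast
  moreover have "{[r]} = {xs. length xs = 1 \<and> xs!0 = r}"
    (is "?L = ?R")
  proof (intro set_eqI iffI)
    fix zs assume "zs \<in> ?L" thus "zs \<in> ?R" by auto
  next
    fix zs assume zs: "zs \<in> ?R"
    obtain x where e: "zs = [x]" using zs by (cases zs) auto
    show "zs \<in> ?L" using zs unfolding e by auto
  qed
  ultimately show ?thesis unfolding dfn_def by (rule back_subst)
qed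

lemma dfn_add: "dfn S 3 (\<lambda>xs. xs!2 = xs!0 + xs!1)"
proof -
  have "{[x, y, x + y] | x y. True} \<in> S 3" by (rule ax_add)
  moreover have "{[x, y, x + y] | x y. True} = {xs. length xs = 3 \<and> xs!2 = xs!0 + xs!1}"
    (is "?L = ?R")
  proof (intro set_eqI iffI)
    fix zs assume "zs \<in> ?L" thus "zs \<in> ?R" by auto
  next
    fix zs assume zs: "zs \<in> ?R"
    obtain x y z where e: "zs = [x, y, z]" using len3[of zs] zs by auto
    show "zs \<in> ?L" using zs unfolding e by auto
  qed
  ultimately show ?thesis unfolding dfn_def by (rule back_subst)
qed

lemma dfn_mul: "dfn S 3 (\<lambda>xs. xs!2 = xs!0 * xs!1)"
proof -
  have "{[x, y, x * y] | x y. True} \<in> S 3" by (rule ax_mul)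
  moreover have "{[x, y, x * y] | x y. True} = {xs. length xs = 3 \<and> xs!2 = xs!0 * xs!1}"
    (is "?L = ?R")
  proof (intro set_eqI iffI)
    fix zs assume "zs \<in> ?L" thus "zs \<in> ?R" by auto
  next
    fix zs assume zs: "zs \<in> ?R"
    obtain x y z where e: "zs = [x, y, z]" using len3[of zs] zs by auto
    show "zs \<in> ?L" using zs unfolding e by auto
  qed
  ultimately show ?thesis unfolding dfn_def by (rule back_subst)
qed


lemma dfn_take: "dfn S n P \<Longrightarrow> dfn S (n + k) (\<lambda>xs. P (take n xs))"
proof (induction k)
  case 0
  have "dfn S n (\<lambda>xs. P (take n xs))" by (rule dfn_cong[rotated, OF 0]) simp
  thus ?case by simp
next
  case (Suc k)
  hence "dfn S (Suc (n + k)) (\<lambda>xs. P (take n (butlast xs)))" by (intro dfn_snoc) auto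
  thus ?case unfolding add_Suc_right by (rule dfn_cong[rotated]) (simp add: butlast_conv_take)
qed

lemma dfn_drop: "dfn S n P \<Longrightarrow> dfn S (k + n) (\<lambda>xs. P (drop k xs))"
proof (induction k)
  case 0
  have "dfn S n (\<lambda>xs. P (drop 0 xs))" by (rule dfn_cong[rotated, OF 0]) simp
  thus ?case by simp
next
  case (Suc k)
  hence "dfn S (Suc (k + n)) (\<lambda>xs. P (drop k (tl xs)))" by (intro dfn_cons) auto
  thus ?case unfolding add_Suc by (rule dfn_cong[rotated]) (simp add: drop_Suc)
qed

lemma dfn_exs: "dfn S (n + k) P \<Longrightarrow> dfn S n (\<lambda>xs. \<exists>zs. length zs = k \<and> P (xs @ zs))"
proof (induction k arbitrary: P)
  case 0
  have "dfn S n P" using 0 by simp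
  thus ?case by (rule dfn_cong[rotated]) auto
next
  case (Suc k)
  have "dfn S (n + k) (\<lambda>xs. \<exists>r. P (xs @ [r]))" using Suc.prems by (intro dfn_proj) auto
  hence "dfn S n (\<lambda>xs. \<exists>zs. length zs = k \<and> (\<exists>r. P ((xs @ zs) @ [r])))" by (rule Suc.IH)
  thus ?case
  proof (rule dfn_cong[rotated])
    fix xs :: "real list"
    show "(\<exists>zs. length zs = k \<and> (\<exists>r. P ((xs @ zs) @ [r]))) = (\<exists>zs. length zs = Suc k \<and> P (xs @ zs))"
    proof
      assume "\<exists>zs. length zs = k \<and> (\<exists>r. P ((xs @ zs) @ [r]))"
      then obtain zs r where "length zs = k" "P ((xs @ zs) @ [r])" by blast
      thus "\<exists>zs. length zs = Suc k \<and> P (xs @ zs)" by (intro exI[of _ "zs @ [r]"]) auto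
    next
      assume "\<exists>zs. length zs = Suc k \<and> P (xs @ zs)"
      then obtain zs where zs: "length zs = Suc k" "P (xs @ zs)" by blast
      obtain ys r where e: "zs = ys @ [r]" using zs by (cases zs rule: rev_cases) auto
      show "\<exists>zs. length zs = k \<and> (\<exists>r. P ((xs @ zs) @ [r]))" using zs unfolding e by auto
    qed
  qed
qed

lemma dfn_allfin: assumes "\<And>j. j < (k::nat) \<Longrightarrow> dfn S n (Q j)" shows "dfn S n (\<lambda>xs. \<forall>j<k. Q j xs)"
  using assms
proof (induct k)
  case 0 show ?case by (rule dfn_cong[rotated, OF dfn_True]) auto
next
  case (Suc k)
  have "dfn S n (\<lambda>xs. (\<forall>j<k. Q j xs) \<and> Q k xs)" using Suc by (intro dfn_and) auto
  thus ?case by (rule dfn_cong[rotated]) (auto simp: less_Suc_eq)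
qed

lemma dfn_subst:
  assumes "dfn S k P" "\<forall>i\<in>set idx. i < m" "length idx = k"
  shows "dfn S m (\<lambda>xs. P (map (\<lambda>i. xs ! i) idx))"
proof -
  have ib: "\<forall>j<k. idx ! j < m" using assms(2,3) by auto
  have "dfn S (m + k) (\<lambda>ws. P (drop m ws) \<and> (\<forall>j<k. ws ! (m + j) = ws ! (idx ! j)))"
    using assms ib by (intro dfn_and dfn_drop dfn_allfin dfn_eq) (auto simp: add.commute less_imp_le trans_less_add1)
  hence "dfn S m (\<lambda>xs. \<exists>zs. length zs = k \<and> (P (drop m (xs @ zs)) \<and> (\<forall>j<k. (xs @ zs) ! (m + j) = (xs @ zs) ! (idx ! j))))"
    by (rule dfn_exs)
  thus ?thesis
  proof (rule dfn_cong[rotated])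
    fix xs :: "real list" assume xs: "length xs = m"
    have "(\<exists>zs. length zs = k \<and> (P (drop m (xs @ zs)) \<and> (\<forall>j<k. (xs @ zs) ! (m + j) = (xs @ zs) ! (idx ! j))))
        = (\<exists>zs. length zs = k \<and> P zs \<and> (\<forall>j<k. zs ! j = xs ! (idx ! j)))"
      using xs assms(2,3) by (auto simp: nth_append)
    also have "\<dots> = P (map (\<lambda>i. xs ! i) idx)"
    proof
      assume "\<exists>zs. length zs = k \<and> P zs \<and> (\<forall>j<k. zs ! j = xs ! (idx ! j))"
      then obtain zs where zs: "length zs = k" "P zs" "\<forall>j<k. zs ! j = xs ! (idx ! j)" by blast
      have "zs = map (\<lambda>i. xs ! i) idx" using zs assms(3) by (intro nth_equalityI) auto
      thus "P (map (\<lambda>i. xs ! i) idx)" using zs by simp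
    next
      assume "P (map (\<lambda>i. xs ! i) idx)"
      thus "\<exists>zs. length zs = k \<and> P zs \<and> (\<forall>j<k. zs ! j = xs ! (idx ! j))"
        using assms(3) by (intro exI[of _ "map (\<lambda>i. xs ! i) idx"]) auto
    qed
    finally show "(\<exists>zs. length zs = k \<and> (P (drop m (xs @ zs)) \<and> (\<forall>j<k. (xs @ zs) ! (m + j) = (xs @ zs) ! (idx ! j))))
        = P (map (\<lambda>i. xs ! i) idx)" .
  qed
qed

end

datatype tm = V nat | Cs real | Pl tm tm | Ml tm tm

fun teval :: "tm \<Rightarrow> real list \<Rightarrow> real" where
  "teval (V i) xs = xs ! i"
| "teval (Cs r) xs = r"
| "teval (Pl s t) xs = teval s xs + teval t xs"
| "teval (Ml s t) xs = teval s xs * teval t xs"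

fun tb :: "nat \<Rightarrow> tm \<Rightarrow> bool" where
  "tb n (V i) = (i < n)"
| "tb n (Cs r) = True"
| "tb n (Pl s t) = (tb n s \<and> tb n t)"
| "tb n (Ml s t) = (tb n s \<and> tb n t)"

lemma teval_cong: "tb n t \<Longrightarrow> (\<And>i. i < n \<Longrightarrow> xs ! i = ys ! i) \<Longrightarrow> teval t xs = teval t ys"
  by (induction t) auto

lemma tb_mono: "tb n t \<Longrightarrow> n \<le> m \<Longrightarrow> tb m t"
  by (induction t) auto

lemma map_nth_upt1: "i < n \<Longrightarrow> map (\<lambda>j. ws ! j) ([0..<n] @ [p]) ! i = ws ! i"
  by (simp add: nth_append)
lemma map_nth_upt2: "map (\<lambda>j. ws ! j) ([0..<n] @ [p]) ! n = ws ! p"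
  by (simp add: nth_append)

datatype fm = Lt tm tm | Eq tm tm | Rl "real list set" "nat list" | Ng fm | Cj fm fm | Dj fm fm | Ex fm

fun sat :: "fm \<Rightarrow> real list \<Rightarrow> bool" where
  "sat (Lt s t) xs = (teval s xs < teval t xs)"
| "sat (Eq s t) xs = (teval s xs = teval t xs)"
| "sat (Rl A idx) xs = (map (\<lambda>i. xs ! i) idx \<in> A)"
| "sat (Ng f) xs = (\<not> sat f xs)"
| "sat (Cj f g) xs = (sat f xs \<and> sat g xs)"
| "sat (Dj f g) xs = (sat f xs \<or> sat g xs)"
| "sat (Ex f) xs = (\<exists>r. sat f (xs @ [r]))"

fun wf :: "(nat \<Rightarrow> real list set set) \<Rightarrow> nat \<Rightarrow> fm \<Rightarrow> bool" where
  "wf S n (Lt s t) = (tb n s \<and> tb n t)"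
| "wf S n (Eq s t) = (tb n s \<and> tb n t)"
| "wf S n (Rl A idx) = (A \<in> S (length idx) \<and> (\<forall>i\<in>set idx. i < n))"
| "wf S n (Ng f) = wf S n f"
| "wf S n (Cj f g) = (wf S n f \<and> wf S n g)"
| "wf S n (Dj f g) = (wf S n f \<and> wf S n g)"
| "wf S n (Ex f) = wf S (Suc n) f"

context str begin

lemma tm_bin:
  assumes op: "dfn S 3 (\<lambda>xs. xs!2 = f (xs!0) (xs!1))"
    and gs: "dfn S (Suc n) (\<lambda>xs. xs!n = teval s xs)" and gt: "dfn S (Suc n) (\<lambda>xs. xs!n = teval t xs)"
    and bs: "tb n s" and bt: "tb n t"
  shows "dfn S (Suc n) (\<lambda>xs. xs!n = f (teval s xs) (teval t xs))"
proof -
  let ?i1 = "[0..<n] @ [n+1]" and ?i2 = "[0..<n] @ [n+2]" and ?i3 = "[n+1, n+2, n]"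
  have "dfn S (Suc n + 2) (\<lambda>ws.
      (map (\<lambda>j. ws ! j) ?i1) ! n = teval s (map (\<lambda>j. ws ! j) ?i1) \<and>
      (map (\<lambda>j. ws ! j) ?i2) ! n = teval t (map (\<lambda>j. ws ! j) ?i2) \<and>
      (map (\<lambda>j. ws ! j) ?i3) ! 2 = f ((map (\<lambda>j. ws ! j) ?i3) ! 0) ((map (\<lambda>j. ws ! j) ?i3) ! 1))"
  proof -
    have c1: "dfn S (Suc n + 2) (\<lambda>ws. (map (\<lambda>j. ws ! j) ?i1) ! n = teval s (map (\<lambda>j. ws ! j) ?i1))"
      by (rule dfn_subst[OF gs, where idx="?i1"]) (simp_all add: less_Suc_eq)
    have c2: "dfn S (Suc n + 2) (\<lambda>ws. (map (\<lambda>j. ws ! j) ?i2) ! n = teval t (map (\<lambda>j. ws ! j) ?i2))"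
      by (rule dfn_subst[OF gt, where idx="?i2"]) (simp_all add: less_Suc_eq)
    have c3: "dfn S (Suc n + 2) (\<lambda>ws. (map (\<lambda>j. ws ! j) ?i3) ! 2 = f ((map (\<lambda>j. ws ! j) ?i3) ! 0) ((map (\<lambda>j. ws ! j) ?i3) ! 1))"
      by (rule dfn_subst[OF op, where idx="?i3"]) (simp_all add: less_Suc_eq)
    show ?thesis by (rule dfn_and[OF c1 dfn_and[OF c2 c3]])
  qed
  note cc = this
  have "dfn S (Suc n) (\<lambda>xs. \<exists>zs. length zs = 2 \<and> (let ws = xs @ zs in
      (map (\<lambda>j. ws ! j) ?i1) ! n = teval s (map (\<lambda>j. ws ! j) ?i1) \<and>
      (map (\<lambda>j. ws ! j) ?i2) ! n = teval t (map (\<lambda>j. ws ! j) ?i2) \<and>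
      (map (\<lambda>j. ws ! j) ?i3) ! 2 = f ((map (\<lambda>j. ws ! j) ?i3) ! 0) ((map (\<lambda>j. ws ! j) ?i3) ! 1)))"
    using dfn_exs[OF cc] by (simp only: Let_def)
  thus ?thesis
  proof (rule dfn_cong[rotated])
    fix xs :: "real list" assume xs: "length xs = Suc n"
    have key: "(let ws = xs @ zs in
      (map (\<lambda>j. ws ! j) ?i1) ! n = teval s (map (\<lambda>j. ws ! j) ?i1) \<and>
      (map (\<lambda>j. ws ! j) ?i2) ! n = teval t (map (\<lambda>j. ws ! j) ?i2) \<and>
      (map (\<lambda>j. ws ! j) ?i3) ! 2 = f ((map (\<lambda>j. ws ! j) ?i3) ! 0) ((map (\<lambda>j. ws ! j) ?i3) ! 1))
      = (zs ! 0 = teval s xs \<and> zs ! 1 = teval t xs \<and> xs ! n = f (zs!0) (zs!1))"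
      if zs: "length zs = 2" for zs
    proof -
      have e1: "teval s (map (\<lambda>j. (xs @ zs) ! j) ?i1) = teval s xs"
        by (rule teval_cong[OF bs]) (use xs in \<open>simp add: map_nth_upt1 nth_append\<close>)
      have e2: "teval t (map (\<lambda>j. (xs @ zs) ! j) ?i2) = teval t xs"
        by (rule teval_cong[OF bt]) (use xs in \<open>simp add: map_nth_upt1 nth_append\<close>)
      show ?thesis unfolding Let_def e1 e2 map_nth_upt2 using xs zs by (simp add: nth_append)
    qed
    show "(\<exists>zs. length zs = 2 \<and> (let ws = xs @ zs in
      (map (\<lambda>j. ws ! j) ?i1) ! n = teval s (map (\<lambda>j. ws ! j) ?i1) \<and>
      (map (\<lambda>j. ws ! j) ?i2) ! n = teval t (map (\<lambda>j. ws ! j) ?i2) \<and>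
      (map (\<lambda>j. ws ! j) ?i3) ! 2 = f ((map (\<lambda>j. ws ! j) ?i3) ! 0) ((map (\<lambda>j. ws ! j) ?i3) ! 1)))
      = (xs!n = f (teval s xs) (teval t xs))"
    proof
      assume "\<exists>zs. length zs = 2 \<and> (let ws = xs @ zs in
      (map (\<lambda>j. ws ! j) ?i1) ! n = teval s (map (\<lambda>j. ws ! j) ?i1) \<and>
      (map (\<lambda>j. ws ! j) ?i2) ! n = teval t (map (\<lambda>j. ws ! j) ?i2) \<and>
      (map (\<lambda>j. ws ! j) ?i3) ! 2 = f ((map (\<lambda>j. ws ! j) ?i3) ! 0) ((map (\<lambda>j. ws ! j) ?i3) ! 1))"
      then obtain zs where "length zs = 2" "zs ! 0 = teval s xs \<and> zs ! 1 = teval t xs \<and> xs ! n = f (zs!0) (zs!1)"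
        using key by blast
      thus "xs!n = f (teval s xs) (teval t xs)" by metis
    next
      assume h: "xs!n = f (teval s xs) (teval t xs)"
      have "length [teval s xs, teval t xs] = 2" by simp
      moreover have "[teval s xs, teval t xs] ! 0 = teval s xs \<and> [teval s xs, teval t xs] ! 1 = teval t xs \<and>
        xs ! n = f ([teval s xs, teval t xs]!0) ([teval s xs, teval t xs]!1)" using h by simp
      ultimately show "\<exists>zs. length zs = 2 \<and> (let ws = xs @ zs in
      (map (\<lambda>j. ws ! j) ?i1) ! n = teval s (map (\<lambda>j. ws ! j) ?i1) \<and>
      (map (\<lambda>j. ws ! j) ?i2) ! n = teval t (map (\<lambda>j. ws ! j) ?i2) \<and>
      (map (\<lambda>j. ws ! j) ?i3) ! 2 = f ((map (\<lambda>j. ws ! j) ?i3) ! 0) ((map (\<lambda>j. ws ! j) ?i3) ! 1))"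
        using key by blast
    qed
  qed
qed

lemma tm_graph: "tb n t \<Longrightarrow> dfn S (Suc n) (\<lambda>xs. xs!n = teval t xs)"
proof (induction t)
  case (V i) thus ?case by (auto intro: dfn_eq)
next
  case (Cs r)
  have "dfn S (Suc n) (\<lambda>xs. map (\<lambda>i. xs ! i) [n] ! 0 = r)" by (rule dfn_subst[OF dfn_const]) auto
  thus ?case by simp
next
  case (Pl s t)
  hence bs: "tb n s" and bt: "tb n t" by auto
  show ?case using tm_bin[where f="(+)", OF dfn_add Pl.IH(1)[OF bs] Pl.IH(2)[OF bt] bs bt] by simp
next
  case (Ml s t)
  hence bs: "tb n s" and bt: "tb n t" by auto
  show ?case using tm_bin[where f="(*)", OF dfn_mul Ml.IH(1)[OF bs] Ml.IH(2)[OF bt] bs bt] by simp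
qed

lemma tm_rel:
  assumes R: "dfn S 2 R" and bs: "tb n s" and bt: "tb n t"
  shows "dfn S n (\<lambda>xs. R [teval s xs, teval t xs])"
proof -
  note gs = tm_graph[OF bs] and gt = tm_graph[OF bt]
  let ?i1 = "[0..<n] @ [n]" and ?i2 = "[0..<n] @ [n+1]" and ?i3 = "[n, n+1]"
  have "dfn S (n + 2) (\<lambda>ws.
      (map (\<lambda>j. ws ! j) ?i1) ! n = teval s (map (\<lambda>j. ws ! j) ?i1) \<and>
      (map (\<lambda>j. ws ! j) ?i2) ! n = teval t (map (\<lambda>j. ws ! j) ?i2) \<and>
      R (map (\<lambda>j. ws ! j) ?i3))"
  proof -
    have c1: "dfn S (n + 2) (\<lambda>ws. (map (\<lambda>j. ws ! j) ?i1) ! n = teval s (map (\<lambda>j. ws ! j) ?i1))"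
      by (rule dfn_subst[OF gs, where idx="?i1"]) (simp_all add: less_Suc_eq)
    have c2: "dfn S (n + 2) (\<lambda>ws. (map (\<lambda>j. ws ! j) ?i2) ! n = teval t (map (\<lambda>j. ws ! j) ?i2))"
      by (rule dfn_subst[OF gt, where idx="?i2"]) (simp_all add: less_Suc_eq)
    have c3: "dfn S (n + 2) (\<lambda>ws. R (map (\<lambda>j. ws ! j) ?i3))"
      by (rule dfn_subst[OF R, where idx="?i3"]) (simp_all add: less_Suc_eq)
    show ?thesis by (rule dfn_and[OF c1 dfn_and[OF c2 c3]])
  qed
  note cc = this
  have "dfn S n (\<lambda>xs. \<exists>zs. length zs = 2 \<and> (let ws = xs @ zs in
      (map (\<lambda>j. ws ! j) ?i1) ! n = teval s (map (\<lambda>j. ws ! j) ?i1) \<and>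
      (map (\<lambda>j. ws ! j) ?i2) ! n = teval t (map (\<lambda>j. ws ! j) ?i2) \<and>
      R (map (\<lambda>j. ws ! j) ?i3)))"
    using dfn_exs[OF cc] by (simp only: Let_def)
  thus ?thesis
  proof (rule dfn_cong[rotated])
    fix xs :: "real list" assume xs: "length xs = n"
    have key: "(let ws = xs @ zs in
      (map (\<lambda>j. ws ! j) ?i1) ! n = teval s (map (\<lambda>j. ws ! j) ?i1) \<and>
      (map (\<lambda>j. ws ! j) ?i2) ! n = teval t (map (\<lambda>j. ws ! j) ?i2) \<and>
      R (map (\<lambda>j. ws ! j) ?i3))
      = (zs ! 0 = teval s xs \<and> zs ! 1 = teval t xs \<and> R [zs!0, zs!1])"
      if zs: "length zs = 2" for zs
    proof -
      have e1: "teval s (map (\<lambda>j. (xs @ zs) ! j) ?i1) = teval s xs"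
        by (rule teval_cong[OF bs]) (use xs in \<open>simp add: map_nth_upt1 nth_append\<close>)
      have e2: "teval t (map (\<lambda>j. (xs @ zs) ! j) ?i2) = teval t xs"
        by (rule teval_cong[OF bt]) (use xs in \<open>simp add: map_nth_upt1 nth_append\<close>)
      show ?thesis unfolding Let_def e1 e2 map_nth_upt2 using xs zs by (simp add: nth_append)
    qed
    show "(\<exists>zs. length zs = 2 \<and> (let ws = xs @ zs in
      (map (\<lambda>j. ws ! j) ?i1) ! n = teval s (map (\<lambda>j. ws ! j) ?i1) \<and>
      (map (\<lambda>j. ws ! j) ?i2) ! n = teval t (map (\<lambda>j. ws ! j) ?i2) \<and>
      R (map (\<lambda>j. ws ! j) ?i3)))
      = R [teval s xs, teval t xs]"
    proof
      assume "\<exists>zs. length zs = 2 \<and> (let ws = xs @ zs in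
      (map (\<lambda>j. ws ! j) ?i1) ! n = teval s (map (\<lambda>j. ws ! j) ?i1) \<and>
      (map (\<lambda>j. ws ! j) ?i2) ! n = teval t (map (\<lambda>j. ws ! j) ?i2) \<and>
      R (map (\<lambda>j. ws ! j) ?i3))"
      then obtain zs where "length zs = 2" "zs ! 0 = teval s xs \<and> zs ! 1 = teval t xs \<and> R [zs!0, zs!1]"
        using key by blast
      thus "R [teval s xs, teval t xs]" by metis
    next
      assume h: "R [teval s xs, teval t xs]"
      have "length [teval s xs, teval t xs] = 2" by simp
      moreover have "[teval s xs, teval t xs] ! 0 = teval s xs \<and> [teval s xs, teval t xs] ! 1 = teval t xs \<and>
        R [[teval s xs, teval t xs]!0, [teval s xs, teval t xs]!1]" using h by simp
      ultimately show "\<exists>zs. length zs = 2 \<and> (let ws = xs @ zs in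
      (map (\<lambda>j. ws ! j) ?i1) ! n = teval s (map (\<lambda>j. ws ! j) ?i1) \<and>
      (map (\<lambda>j. ws ! j) ?i2) ! n = teval t (map (\<lambda>j. ws ! j) ?i2) \<and>
      R (map (\<lambda>j. ws ! j) ?i3))"
        using key by blast
    qed
  qed
qed

lemma sat_dfn: "wf S n f \<Longrightarrow> dfn S n (sat f)"
proof (induction f arbitrary: n)
  case (Lt s t)
  have "dfn S n (\<lambda>xs. [teval s xs, teval t xs] ! 0 < [teval s xs, teval t xs] ! 1)"
    using Lt by (intro tm_rel[OF dfn_lt]) simp_all
  thus ?case by (rule dfn_cong[rotated]) simp
next
  case (Eq s t)
  have "dfn S n (\<lambda>xs. [teval s xs, teval t xs] ! 0 = [teval s xs, teval t xs] ! 1)"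
    using Eq by (intro tm_rel[OF dfn_eq[of 0 2 1]]) simp_all
  thus ?case by (rule dfn_cong[rotated]) simp
next
  case (Rl A idx)
  have A: "A \<in> S (length idx)" "\<forall>i\<in>set idx. i < n" using Rl by auto
  have "{zs. length zs = length idx \<and> zs \<in> A} = A" using sub[OF A(1)] by auto
  hence "dfn S (length idx) (\<lambda>zs. zs \<in> A)" using A(1) unfolding dfn_def by simp
  hence "dfn S n (\<lambda>xs. map (\<lambda>i. xs ! i) idx \<in> A)" using A(2) by (rule dfn_subst) simp
  thus ?case by simp
next
  case (Ng f) thus ?case by (auto intro: dfn_not)
next
  case (Cj f g) thus ?case by (auto intro: dfn_and)
next
  case (Dj f g) thus ?case by (auto intro: dfn_or)
next
  case (Ex f)
  hence "dfn S (Suc n) (sat f)" by simp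
  hence "dfn S n (\<lambda>xs. \<exists>r. sat f (xs @ [r]))" by (rule dfn_proj)
  thus ?case by simp
qed

end


definition en :: "('m::{finite,linorder}) list" where "en = sorted_list_of_set UNIV"

lemma en_distinct: "distinct (en :: ('m::{finite,linorder}) list)" unfolding en_def by simp
lemma en_set: "set (en :: ('m::{finite,linorder}) list) = UNIV" unfolding en_def by simp
lemma en_length: "length (en :: ('m::{finite,linorder}) list) = CARD('m)" unfolding en_def by simp

lemma coords_en: "coords x = map (\<lambda>i. x $ i) en" unfolding coords_def en_def ..
lemma coords_length[simp]: "length (coords (x :: real ^ ('m::{finite,linorder}))) = CARD('m)"
  by (simp add: coords_en en_length)
lemma coords_nth: "i < CARD('m::{finite,linorder}) \<Longrightarrow> coords (x :: real ^ ('m::{finite,linorder})) ! i = x $ (en ! i)"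
  by (simp add: coords_en en_length)

lemma en_bij: "bij_betw (\<lambda>i. (en :: ('m::{finite,linorder}) list) ! i) {..<CARD('m)} UNIV"
proof -
  have "inj_on (\<lambda>i. (en :: 'm list) ! i) {..<CARD('m)}"
    using en_distinct[where 'm='m] by (auto simp: inj_on_def en_length[symmetric] nth_eq_iff_index_eq)
  moreover have "(\<lambda>i. (en :: 'm list) ! i) ` {..<CARD('m)} = UNIV"
    using en_set[where 'm='m] by (auto simp: set_conv_nth en_length)
  ultimately show ?thesis by (simp add: bij_betw_def)
qed

lemma sum_en: "(\<Sum>i<CARD('m::{finite,linorder}). f ((en :: ('m::{finite,linorder}) list) ! i)) = (\<Sum>j\<in>UNIV. f j)"
  using sum.reindex_bij_betw[OF en_bij, of f] .

lemma coords_inj: "coords (x :: real ^ ('m::{finite,linorder})) = coords x' \<Longrightarrow> x = x'"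
proof -
  assume h: "coords x = coords x'"
  show "x = x'"
  proof (rule vec_eq_iff[THEN iffD2], rule allI)
    fix j :: 'm
    have "j \<in> (\<lambda>i. (en :: 'm list) ! i) ` {..<CARD('m)}" using en_bij[where 'm='m] by (simp add: bij_betw_def)
    then obtain i where i: "i < CARD('m)" "en ! i = j" by auto
    have "coords x ! i = coords x' ! i" using h by simp
    moreover have "coords x ! i = x $ j" using coords_nth[OF i(1), of x] i(2) by simp
    moreover have "coords x' ! i = x' $ j" using coords_nth[OF i(1), of x'] i(2) by simp
    ultimately show "x $ j = x' $ j" by simp
  qed
qed

lemma coords_surj: "length xs = CARD('m::{finite,linorder}) \<Longrightarrow> \<exists>x :: real ^ ('m::{finite,linorder}). coords x = xs"
proof -
  assume l: "length xs = CARD('m)"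
  define g where "g = the_inv_into {..<CARD('m)} (\<lambda>i. (en :: 'm list) ! i)"
  define x where "x = (\<chi> j. xs ! g j)"
  have "coords x = xs"
  proof (rule nth_equalityI)
    show "length (coords x) = length xs" using l by simp
    fix i assume "i < length (coords x)"
    hence i: "i < CARD('m)" by simp
    have inj: "inj_on (\<lambda>i. (en :: 'm list) ! i) {..<CARD('m)}" using en_bij[where 'm='m] by (simp add: bij_betw_def)
    have "g (en ! i) = i" unfolding g_def
      using the_inv_into_f_f[OF inj, of i] i by simp
    thus "coords x ! i = xs ! i" using i by (simp add: coords_nth x_def)
  qed
  thus ?thesis by blast
qed

lemma ex_coords: "(\<exists>zs. length zs = CARD('m::{finite,linorder}) \<and> P zs) \<longleftrightarrow> (\<exists>x :: real ^ ('m::{finite,linorder}). P (coords x))"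
  (is "?L \<longleftrightarrow> ?R")
proof
  assume ?L
  then obtain zs where zs: "length zs = CARD('m)" "P zs" by blast
  show ?R using coords_surj[OF zs(1)] zs(2) by blast
next
  assume ?R
  thus ?L
  proof (elim exE)
    fix x :: "real ^ ('m::{finite,linorder})" assume "P (coords x)"
    thus ?L by (intro exI[of _ "coords x"]) simp
  qed
qed

lemma all_coords: "(\<forall>zs. length zs = CARD('m::{finite,linorder}) \<longrightarrow> P zs) \<longleftrightarrow> (\<forall>x :: real ^ ('m::{finite,linorder}). P (coords x))"
  (is "?L \<longleftrightarrow> ?R")
proof
  assume L: ?L
  show ?R
  proof
    fix x :: "real ^ ('m::{finite,linorder})"
    show "P (coords x)" using L by simp
  qed
next
  assume R: ?R
  show ?L
  proof (intro allI impI)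
    fix zs :: "real list" assume "length zs = CARD('m)"
    then obtain x :: "real ^ ('m::{finite,linorder})" where "coords x = zs" using coords_surj by blast
    thus "P zs" using R by blast
  qed
qed

lemma sumsq_coords: "(\<Sum>i<CARD('m::{finite,linorder}). (coords x ! i - coords x' ! i)^2) = (dist x x')^2"
  for x x' :: "real ^ ('m::{finite,linorder})"
proof -
  have "(\<Sum>i<CARD('m). (coords x ! i - coords x' ! i)^2) = (\<Sum>i<CARD('m). (x $ (en!i) - x' $ (en!i))^2)"
    by (rule sum.cong) (auto simp: coords_nth)
  also have "\<dots> = (\<Sum>j\<in>UNIV. (x $ j - x' $ j)^2)" using sum_en[of "\<lambda>j. (x $ j - x' $ j)^2"] by simp
  also have "\<dots> = (dist x x')^2"
  proof -
    have "(dist x x')^2 = (sqrt (\<Sum>j\<in>UNIV. (norm ((x - x') $ j))^2))^2"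
      unfolding dist_norm norm_vec_def L2_set_def ..
    also have "\<dots> = (\<Sum>j\<in>UNIV. (norm ((x - x') $ j))^2)"
      by (rule real_sqrt_pow2) (simp add: sum_nonneg)
    also have "\<dots> = (\<Sum>j\<in>UNIV. (x $ j - x' $ j)^2)" by simp
    finally show ?thesis by simp
  qed
  finally show ?thesis .
qed

lemma app_coords_eq: "coords (x :: real ^ ('m::{finite,linorder})) @ coords (v :: real ^ ('n::{finite,linorder})) = coords x' @ coords v'
   \<longleftrightarrow> x = x' \<and> v = v'"
proof
  assume h: "coords x @ coords v = coords x' @ coords v'"
  have "coords x = coords x' \<and> coords v = coords v'"
    by (rule append_eq_append_conv[THEN iffD1, OF _ h]) simp
  thus "x = x' \<and> v = v'" using coords_inj[of x x'] coords_inj[of v v'] by simp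
qed simp


definition "sub s t = Pl s (Ml (Cs (-1)) t)"
definition "sq s = Ml s s"
fun sumtm :: "(nat \<Rightarrow> tm) \<Rightarrow> nat \<Rightarrow> tm" where
  "sumtm f 0 = Cs 0"
| "sumtm f (Suc k) = Pl (sumtm f k) (f k)"

lemma teval_sub[simp]: "teval (sub s t) xs = teval s xs - teval t xs" by (simp add: sub_def)
lemma teval_sq[simp]: "teval (sq s) xs = (teval s xs)^2" by (simp add: sq_def power2_eq_square)
lemma tb_sub[simp]: "tb n (sub s t) = (tb n s \<and> tb n t)" by (simp add: sub_def)
lemma tb_sq[simp]: "tb n (sq s) = tb n s" by (simp add: sq_def)
lemma teval_sumtm[simp]: "teval (sumtm f k) xs = (\<Sum>i<k. teval (f i) xs)" by (induction k) auto
lemma tb_sumtm: "(\<And>i. i < k \<Longrightarrow> tb n (f i)) \<Longrightarrow> tb n (sumtm f k)" by (induction k) auto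

definition "sqd p q k = sumtm (\<lambda>i. sq (sub (V (p+i)) (V (q+i)))) k"
definition "sqdc p c k = sumtm (\<lambda>i. sq (sub (V (p+i)) (Cs (c!i)))) k"

lemma tb_sqd: "p + k \<le> n \<Longrightarrow> q + k \<le> n \<Longrightarrow> tb n (sqd p q k)"
  unfolding sqd_def by (rule tb_sumtm) simp
lemma tb_sqdc: "p + k \<le> n \<Longrightarrow> tb n (sqdc p c k)"
  unfolding sqdc_def by (rule tb_sumtm) simp

fun conjs :: "(nat \<Rightarrow> fm) \<Rightarrow> nat \<Rightarrow> fm" where
  "conjs f 0 = Eq (Cs 0) (Cs 0)"
| "conjs f (Suc k) = Cj (conjs f k) (f k)"

lemma sat_conjs[simp]: "sat (conjs f k) xs = (\<forall>i<k. sat (f i) xs)"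
  by (induction k) (auto simp: less_Suc_eq)
lemma wf_conjs: "(\<And>i. i < k \<Longrightarrow> wf S n (f i)) \<Longrightarrow> wf S n (conjs f k)"
  by (induction k) auto

definition "Exs k f = (Ex ^^ k) f"
lemma sat_Exs: "sat (Exs k f) xs = (\<exists>zs. length zs = k \<and> sat f (xs @ zs))"
proof (induction k arbitrary: xs)
  case 0 thus ?case by (simp add: Exs_def)
next
  case (Suc k)
  have "sat (Exs (Suc k) f) xs = (\<exists>r. sat (Exs k f) (xs @ [r]))" by (simp add: Exs_def)
  also have "\<dots> = (\<exists>r zs. length zs = k \<and> sat f ((xs @ [r]) @ zs))" using Suc by simp
  also have "\<dots> = (\<exists>zs. length zs = Suc k \<and> sat f (xs @ zs))"
  proof
    assume "\<exists>r zs. length zs = k \<and> sat f ((xs @ [r]) @ zs)"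
    then obtain r zs where "length zs = k" "sat f ((xs @ [r]) @ zs)" by blast
    thus "\<exists>zs. length zs = Suc k \<and> sat f (xs @ zs)" by (intro exI[of _ "r # zs"]) simp
  next
    assume "\<exists>zs. length zs = Suc k \<and> sat f (xs @ zs)"
    then obtain zs where zs: "length zs = Suc k" "sat f (xs @ zs)" by blast
    then obtain r zs' where e: "zs = r # zs'" by (cases zs) auto
    show "\<exists>r zs. length zs = k \<and> sat f ((xs @ [r]) @ zs)"
      using zs unfolding e by (intro exI[of _ r] exI[of _ zs']) simp
  qed
  finally show ?case .
qed
lemma wf_Exs: "wf S n (Exs k f) = wf S (n + k) f"
  by (induction k arbitrary: n) (simp_all add: Exs_def)

definition "Le s t = Ng (Lt t s)"
definition "Imp f g = Dj (Ng f) g"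
definition "Fa f = Ng (Ex (Ng f))"
definition "Alls k f = Ng (Exs k (Ng f))"
lemma sat_Le[simp]: "sat (Le s t) xs = (teval s xs \<le> teval t xs)" by (simp add: Le_def not_less)
lemma sat_Imp[simp]: "sat (Imp f g) xs = (sat f xs \<longrightarrow> sat g xs)" by (simp add: Imp_def)
lemma sat_All[simp]: "sat (Fa f) xs = (\<forall>r. sat f (xs @ [r]))" by (simp add: Fa_def)
lemma sat_Alls: "sat (Alls k f) xs = (\<forall>zs. length zs = k \<longrightarrow> sat f (xs @ zs))" by (simp add: Alls_def sat_Exs)
lemma wf_Le[simp]: "wf S n (Le s t) = (tb n s \<and> tb n t)" by (simp add: Le_def conj_commute)
lemma wf_Imp[simp]: "wf S n (Imp f g) = (wf S n f \<and> wf S n g)" by (simp add: Imp_def)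
lemma wf_All[simp]: "wf S n (Fa f) = wf S (Suc n) f" by (simp add: Fa_def)
lemma wf_Alls: "wf S n (Alls k f) = wf S (n + k) f" by (simp add: Alls_def wf_Exs)

definition inWall :: "real list set \<Rightarrow> real list \<Rightarrow> nat \<Rightarrow> nat \<Rightarrow> nat \<Rightarrow> fm" where
  "inWall GL cy M N d = (let X = Suc d; D = Suc d + M + N in
     Alls M (Imp (Exs N (Cj (conjs (\<lambda>i. Eq (V (D + M + i)) (Cs (cy!i))) N) (Rl GL [D..<D+M+N])))
                 (Dj (Le (V d) (Cs 0)) (Le (Ml (V d) (V d)) (sqd X D M)))))"

definition inWb :: "real list set \<Rightarrow> real list \<Rightarrow> real list \<Rightarrow> nat \<Rightarrow> nat \<Rightarrow> nat \<Rightarrow> nat \<Rightarrow> fm" where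
  "inWb GL ca cy M N pw d = (let X = Suc d; Vv = Suc d + M; D = Suc d + M + N in
     Cj (Rl GL [X..<D]) (Cj (Le (sqdc X ca M) (Cs 1)) (Cj (Le (sqdc Vv cy N) (Cs 1))
       (Cj (inWall GL cy M N d) (Cj (Le (Cs 0) (V pw)) (Eq (Ml (V pw) (V pw)) (sqdc Vv cy N)))))))"

definition inW :: "real list set \<Rightarrow> real list \<Rightarrow> real list \<Rightarrow> nat \<Rightarrow> nat \<Rightarrow> nat \<Rightarrow> nat \<Rightarrow> nat \<Rightarrow> fm" where
  "inW GL ca cy M N pu pw d = Ex (Cj (Eq (Ml (V d) (V pu)) (Cs 1)) (Exs M (Exs N (inWb GL ca cy M N pw d))))"

lemma wf_inW: "GL \<in> S (M + N) \<Longrightarrow> pu < d \<Longrightarrow> pw < d \<Longrightarrow> wf S d (inW GL ca cy M N pu pw d)"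
  unfolding inW_def inWb_def inWall_def Let_def
  apply (simp add: wf_Exs wf_Alls wf_conjs tb_sqd tb_sqdc)
  apply (cases "M + N")
   apply auto
  done


lemma GL_mem: "coords x @ coords v \<in> {coords x @ coords v | x v. (x, v) \<in> G} \<longleftrightarrow> (x, v) \<in> G"
  for x :: "real ^ ('m::{finite,linorder})" and v :: "real ^ ('n::{finite,linorder})"
proof
  assume "coords x @ coords v \<in> {coords x @ coords v | x v. (x, v) \<in> G}"
  then obtain x' v' where e: "coords x @ coords v = coords x' @ coords v'" and g: "(x', v') \<in> G" by blast
  from e have "x = x' \<and> v = v'" by (rule app_coords_eq[THEN iffD1])
  thus "(x, v) \<in> G" using g by simp
qed blast

lemma ix1: "length xs = d \<Longrightarrow> i < CARD('m) \<Longrightarrow>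
   (xs @ t # coords x @ rest) ! (Suc d + i) = coords x ! i"
  for x :: "real ^ ('m::{finite,linorder})"
  by (simp add: nth_append)
lemma ix2: "length xs = d \<Longrightarrow> i < CARD('n) \<Longrightarrow>
   (xs @ t # coords x @ coords v @ rest) ! (Suc d + CARD('m) + i) = coords v ! i"
  for x :: "real ^ ('m::{finite,linorder})" and v :: "real ^ ('n::{finite,linorder})"
  by (simp add: nth_append)
lemma ix3: "length xs = d \<Longrightarrow> i < CARD('m) \<Longrightarrow>
   (xs @ t # coords x @ coords v @ coords x' @ rest) ! (Suc d + CARD('m) + CARD('n) + i) = coords x' ! i"
  for x x' :: "real ^ ('m::{finite,linorder})" and v :: "real ^ ('n::{finite,linorder})"
  by (simp add: nth_append)
lemma ix4: "length xs = d \<Longrightarrow> i < CARD('n) \<Longrightarrow> length zy = CARD('n) \<Longrightarrow>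
   (xs @ t # coords x @ coords v @ coords x' @ zy) ! (Suc d + CARD('m) + CARD('n) + CARD('m) + i) = zy ! i"
  for x x' :: "real ^ ('m::{finite,linorder})" and v :: "real ^ ('n::{finite,linorder})"
  by (simp add: nth_append)
lemma ix0: "length xs = d \<Longrightarrow> (xs @ t # rest) ! d = t"
  by (simp add: nth_append)
lemma ixp: "p < length xs \<Longrightarrow> (xs @ rest) ! p = xs ! p"
  by (simp add: nth_append)

lemma mapix1: "length xs = d \<Longrightarrow>
  map (\<lambda>i. (xs @ t # coords x @ coords v) ! i) [Suc d..<Suc d + CARD('m) + CARD('n)] = coords x @ coords v"
  for x :: "real ^ ('m::{finite,linorder})" and v :: "real ^ ('n::{finite,linorder})"
  by (rule nth_equalityI) (simp_all add: nth_append del: upt_Suc)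
lemma mapix2: "length xs = d \<Longrightarrow> length zy = CARD('n) \<Longrightarrow>
  map (\<lambda>i. (xs @ t # coords x @ coords v @ coords x' @ zy) ! i)
    [Suc d + CARD('m) + CARD('n)..<Suc d + CARD('m) + CARD('n) + CARD('m) + CARD('n)] = coords x' @ zy"
  for x x' :: "real ^ ('m::{finite,linorder})" and v :: "real ^ ('n::{finite,linorder})"
  by (rule nth_equalityI) (simp_all add: nth_append del: upt_Suc)

definition "inWA GL cy M N d = (let D = Suc d + M + N in
   Exs N (Cj (conjs (\<lambda>i. Eq (V (D + M + i)) (Cs (cy!i))) N) (Rl GL [D..<D+M+N])))"
definition "inWB M N d = (let X = Suc d; D = Suc d + M + N in
   Dj (Le (V d) (Cs 0)) (Le (Ml (V d) (V d)) (sqd X D M)))"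
lemma inWall_alt: "inWall GL cy M N d = Alls M (Imp (inWA GL cy M N d) (inWB M N d))"
  unfolding inWall_def inWA_def inWB_def Let_def ..

lemma sat_inWA:
  fixes x x' :: "real ^ ('m::{finite,linorder})" and v y :: "real ^ ('n::{finite,linorder})"
  assumes xs: "length xs = d"
  shows "sat (inWA {coords x @ coords v | x v. (x, v) \<in> G} (coords y) CARD('m) CARD('n) d)
           ((xs @ t # coords x @ coords v) @ coords x') \<longleftrightarrow> (x', y) \<in> G"
proof -
  let ?GL = "{coords x @ coords v | x v. (x, v) \<in> G}"
  have "sat (inWA ?GL (coords y) CARD('m) CARD('n) d) ((xs @ t # coords x @ coords v) @ coords x')
     = (\<exists>zy. length zy = CARD('n) \<and> (\<forall>i<CARD('n). (xs @ t # coords x @ coords v @ coords x' @ zy) ! (Suc d + CARD('m) + CARD('n) + CARD('m) + i) = coords y ! i)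
          \<and> map (\<lambda>i. (xs @ t # coords x @ coords v @ coords x' @ zy) ! i)
    [Suc d + CARD('m) + CARD('n)..<Suc d + CARD('m) + CARD('n) + CARD('m) + CARD('n)] \<in> ?GL)"
    unfolding inWA_def Let_def sat_Exs by simp
  also have "\<dots> = (\<exists>zy. length zy = CARD('n) \<and> zy = coords y \<and> coords x' @ zy \<in> ?GL)"
  proof (intro ex_cong1 conj_cong refl)
    fix zy :: "real list" assume zy: "length zy = CARD('n)"
    have "(\<forall>i<CARD('n). (xs @ t # coords x @ coords v @ coords x' @ zy) ! (Suc d + CARD('m) + CARD('n) + CARD('m) + i) = coords y ! i)
       = (\<forall>i<CARD('n). zy ! i = coords y ! i)" using ix4[OF xs _ zy, where x=x and v=v and x'=x' and t=t] by simp
    also have "\<dots> = (zy = coords y)" using zy by (auto intro: nth_equalityI)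
    finally show "(\<forall>i<CARD('n). (xs @ t # coords x @ coords v @ coords x' @ zy) ! (Suc d + CARD('m) + CARD('n) + CARD('m) + i) = coords y ! i)
       = (zy = coords y)" .
    show "(map (\<lambda>i. (xs @ t # coords x @ coords v @ coords x' @ zy) ! i)
    [Suc d + CARD('m) + CARD('n)..<Suc d + CARD('m) + CARD('n) + CARD('m) + CARD('n)] \<in> ?GL) = (coords x' @ zy \<in> ?GL)"
      using mapix2[OF xs zy, where x=x and v=v and x'=x' and t=t] by simp
  qed
  also have "\<dots> = (coords x' @ coords y \<in> ?GL)" by simp
  also have "\<dots> = ((x', y) \<in> G)" by (rule GL_mem)
  finally show ?thesis .
qed

lemma sat_inWB:
  fixes x x' :: "real ^ ('m::{finite,linorder})" and v :: "real ^ ('n::{finite,linorder})"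
  assumes xs: "length xs = d"
  shows "sat (inWB CARD('m) CARD('n) d) ((xs @ t # coords x @ coords v) @ coords x')
     \<longleftrightarrow> (t \<le> 0 \<or> t * t \<le> (dist x x')^2)"
proof -
  have e0: "(xs @ t # coords x @ coords v @ coords x') ! d = t" using xs by (simp add: nth_append)
  have "(\<Sum>i<CARD('m). ((xs @ t # coords x @ coords v @ coords x') ! (Suc d + i) - (xs @ t # coords x @ coords v @ coords x') ! (Suc d + CARD('m) + CARD('n) + i))^2)
      = (\<Sum>i<CARD('m). (coords x ! i - coords x' ! i)^2)"
    by (rule sum.cong) (use xs in \<open>simp_all add: nth_append\<close>)
  also have "\<dots> = (dist x x')^2" by (rule sumsq_coords)
  finally have e1: "(\<Sum>i<CARD('m). ((xs @ t # coords x @ coords v @ coords x') ! (Suc d + i) - (xs @ t # coords x @ coords v @ coords x') ! (Suc d + CARD('m) + CARD('n) + i))^2)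
      = (dist x x')^2" .
  show ?thesis unfolding inWB_def Let_def sqd_def using e0 e1 by simp
qed

lemma sat_inWall:
  fixes x :: "real ^ ('m::{finite,linorder})" and v y :: "real ^ ('n::{finite,linorder})"
  assumes xs: "length xs = d"
  shows "sat (inWall {coords x @ coords v | x v. (x, v) \<in> G} (coords y) CARD('m) CARD('n) d) (xs @ t # coords x @ coords v)
     \<longleftrightarrow> (\<forall>x'. (x', y) \<in> G \<longrightarrow> t \<le> 0 \<or> t * t \<le> (dist x x')^2)"
proof -
  let ?GL = "{coords x @ coords v | x v. (x, v) \<in> G}"
  let ?L = "xs @ t # coords x @ coords v"
  have "sat (inWall ?GL (coords y) CARD('m) CARD('n) d) ?L
     = (\<forall>zs. length zs = CARD('m) \<longrightarrow> sat (Imp (inWA ?GL (coords y) CARD('m) CARD('n) d) (inWB CARD('m) CARD('n) d)) (?L @ zs))"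
    unfolding inWall_alt sat_Alls ..
  also have "\<dots> = (\<forall>x' :: real ^ ('m::{finite,linorder}). sat (Imp (inWA ?GL (coords y) CARD('m) CARD('n) d) (inWB CARD('m) CARD('n) d)) (?L @ coords x'))"
    by (rule all_coords)
  also have "\<dots> = (\<forall>x'. (x', y) \<in> G \<longrightarrow> t \<le> 0 \<or> t * t \<le> (dist x x')^2)"
    unfolding sat_Imp sat_inWA[OF xs] sat_inWB[OF xs] ..
  finally show ?thesis .
qed

lemma sat_inWb:
  fixes x :: "real ^ ('m::{finite,linorder})" and v y :: "real ^ ('n::{finite,linorder})" and a :: "real ^ ('m::{finite,linorder})"
  assumes xs: "length xs = d" and pw: "pw < d"
  shows "sat (inWb {coords x @ coords v | x v. (x, v) \<in> G} (coords a) (coords y) CARD('m) CARD('n) pw d) (xs @ t # coords x @ coords v)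
     \<longleftrightarrow> (x, v) \<in> G \<and> (dist x a)^2 \<le> 1 \<and> (dist v y)^2 \<le> 1 \<and> (\<forall>x'. (x', y) \<in> G \<longrightarrow> t \<le> 0 \<or> t * t \<le> (dist x x')^2)
         \<and> 0 \<le> xs ! pw \<and> xs ! pw * xs ! pw = (dist v y)^2"
proof -
  let ?GL = "{coords x @ coords v | x v. (x, v) \<in> G}"
  let ?L = "xs @ t # coords x @ coords v"
  have r1: "(map (\<lambda>i. ?L ! i) [Suc d..<Suc d + CARD('m) + CARD('n)] \<in> ?GL) = ((x, v) \<in> G)"
    unfolding mapix1[OF xs] by (rule GL_mem)
  have r2: "teval (sqdc (Suc d) (coords a) CARD('m)) ?L = (dist x a)^2"
  proof -
    have "teval (sqdc (Suc d) (coords a) CARD('m)) ?L = (\<Sum>i<CARD('m). (coords x ! i - coords a ! i)^2)"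
      unfolding sqdc_def teval_sumtm by (rule sum.cong) (use xs in \<open>simp_all add: nth_append\<close>)
    thus ?thesis by (simp add: sumsq_coords)
  qed
  have r3: "teval (sqdc (Suc d + CARD('m)) (coords y) CARD('n)) ?L = (dist v y)^2"
  proof -
    have "teval (sqdc (Suc d + CARD('m)) (coords y) CARD('n)) ?L = (\<Sum>i<CARD('n). (coords v ! i - coords y ! i)^2)"
      unfolding sqdc_def teval_sumtm by (rule sum.cong) (use xs in \<open>simp_all add: nth_append\<close>)
    thus ?thesis by (simp add: sumsq_coords)
  qed
  have r5: "?L ! pw = xs ! pw" using xs pw by (simp add: nth_append)
  show ?thesis unfolding inWb_def Let_def sat.simps teval.simps sat_Le r1 r2 r3 r5 sat_inWall[OF xs]
    by simp
qed

lemma sat_inW: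
  fixes y :: "real ^ ('n::{finite,linorder})" and a :: "real ^ ('m::{finite,linorder})"
    and G :: "((real ^ ('m::{finite,linorder})) \<times> (real ^ ('n::{finite,linorder}))) set"
  assumes xs: "length xs = d" and pu: "pu < d" and pw: "pw < d"
  shows "sat (inW {coords x @ coords v | x v. (x, v) \<in> G} (coords a) (coords y) CARD('m) CARD('n) pu pw d) xs
     \<longleftrightarrow> (\<exists>t. t * xs ! pu = 1 \<and> (\<exists>x v. (x, v) \<in> G \<and> (dist x a)^2 \<le> 1 \<and> (dist v y)^2 \<le> 1 \<and> (\<forall>x'. (x', y) \<in> G \<longrightarrow> t \<le> 0 \<or> t * t \<le> (dist x x')^2)
         \<and> 0 \<le> xs ! pw \<and> xs ! pw * xs ! pw = (dist v y)^2))"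
proof -
  let ?GL = "{coords x @ coords v | x v. (x, v) \<in> G}"
  let ?B = "inWb ?GL (coords a) (coords y) CARD('m) CARD('n) pw d"
  have "sat (inW ?GL (coords a) (coords y) CARD('m) CARD('n) pu pw d) xs
     = (\<exists>t. t * xs ! pu = 1 \<and> (\<exists>zx. length zx = CARD('m) \<and> (\<exists>zv. length zv = CARD('n) \<and> sat ?B (xs @ t # zx @ zv))))"
    unfolding inW_def sat.simps sat_Exs teval.simps using xs pu by (simp add: nth_append)
  also have "\<dots> = (\<exists>t. t * xs ! pu = 1 \<and> (\<exists>(x :: real ^ ('m::{finite,linorder})) (v :: real ^ ('n::{finite,linorder})). sat ?B (xs @ t # coords x @ coords v)))"
  proof -
    have inner: "(\<exists>zx. length zx = CARD('m) \<and> (\<exists>zv. length zv = CARD('n) \<and> sat ?B (xs @ t # zx @ zv)))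
        = (\<exists>(x :: real ^ ('m::{finite,linorder})) (v :: real ^ ('n::{finite,linorder})). sat ?B (xs @ t # coords x @ coords v))" for t
    proof
      assume "\<exists>zx. length zx = CARD('m) \<and> (\<exists>zv. length zv = CARD('n) \<and> sat ?B (xs @ t # zx @ zv))"
      then obtain zx zv where z: "length zx = CARD('m)" "length zv = CARD('n)" "sat ?B (xs @ t # zx @ zv)" by blast
      obtain x :: "real ^ ('m::{finite,linorder})" where ex: "coords x = zx" using coords_surj[OF z(1)] by blast
      obtain v :: "real ^ ('n::{finite,linorder})" where ev: "coords v = zv" using coords_surj[OF z(2)] by blast
      have "sat ?B (xs @ t # coords x @ coords v)" unfolding ex ev by (rule z(3))
      thus "\<exists>(x :: real ^ ('m::{finite,linorder})) (v :: real ^ ('n::{finite,linorder})). sat ?B (xs @ t # coords x @ coords v)" by blast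
    next
      assume "\<exists>(x :: real ^ ('m::{finite,linorder})) (v :: real ^ ('n::{finite,linorder})). sat ?B (xs @ t # coords x @ coords v)"
      then obtain x :: "real ^ ('m::{finite,linorder})" and v :: "real ^ ('n::{finite,linorder})" where "sat ?B (xs @ t # coords x @ coords v)" by blast
      thus "\<exists>zx. length zx = CARD('m) \<and> (\<exists>zv. length zv = CARD('n) \<and> sat ?B (xs @ t # zx @ zv))"
        by (intro exI[of _ "coords x"] conjI exI[of _ "coords v"]) simp_all
    qed
    show ?thesis by (simp only: inner)
  qed
  also have "\<dots> = (\<exists>t. t * xs ! pu = 1 \<and> (\<exists>x v. (x, v) \<in> G \<and> (dist x a)^2 \<le> 1 \<and> (dist v y)^2 \<le> 1 \<and> (\<forall>x'. (x', y) \<in> G \<longrightarrow> t \<le> 0 \<or> t * t \<le> (dist x x')^2)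
         \<and> 0 \<le> xs ! pw \<and> xs ! pw * xs ! pw = (dist v y)^2))"
    unfolding sat_inWb[OF xs pw] ..
  finally show ?thesis .
qed


definition Wset :: "((real ^ ('m::{finite,linorder})) \<times> (real ^ ('n::{finite,linorder}))) set \<Rightarrow> real ^ ('m::{finite,linorder}) \<Rightarrow> real ^ ('n::{finite,linorder}) \<Rightarrow> real \<Rightarrow> real set" where
  "Wset G a y t = {w. \<exists>x v. (x, v) \<in> G \<and> dist x a \<le> 1 \<and> dist v y \<le> 1 \<and> (\<forall>x'. (x', y) \<in> G \<longrightarrow> t \<le> dist x x') \<and> w = dist v y}"

lemma sq_le1: "0 \<le> (r::real) \<Longrightarrow> r^2 \<le> 1 \<longleftrightarrow> r \<le> 1"
  using power2_le_iff_abs_le[of 1 r] by simp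

lemma tt_le: "0 \<le> (D::real) \<Longrightarrow> (t \<le> 0 \<or> t * t \<le> D^2) \<longleftrightarrow> t \<le> D"
proof (cases "t \<le> 0")
  case True assume "0 \<le> D" thus ?thesis using True by simp
next
  case False assume D: "0 \<le> D"
  have "t * t \<le> D^2 \<longleftrightarrow> t^2 \<le> D^2" by (simp add: power2_eq_square)
  also have "\<dots> \<longleftrightarrow> \<bar>t\<bar> \<le> D" by (rule power2_le_iff_abs_le[OF D])
  finally show ?thesis using False by simp
qed

lemma ww_eq: "0 \<le> (D::real) \<Longrightarrow> (0 \<le> w \<and> w * w = D^2) \<longleftrightarrow> w = D"
proof
  assume D: "0 \<le> D" and h: "0 \<le> w \<and> w * w = D^2"
  hence "w^2 = D^2" by (simp add: power2_eq_square)
  thus "w = D" using h D by simp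
next
  assume "0 \<le> D" "w = D" thus "0 \<le> w \<and> w * w = D^2" by (simp add: power2_eq_square)
qed

lemma sat_inW_W:
  fixes y :: "real ^ ('n::{finite,linorder})" and a :: "real ^ ('m::{finite,linorder})"
    and G :: "((real ^ ('m::{finite,linorder})) \<times> (real ^ ('n::{finite,linorder}))) set"
  assumes xs: "length xs = d" and pu: "pu < d" and pw: "pw < d"
  shows "sat (inW {coords x @ coords v | x v. (x, v) \<in> G} (coords a) (coords y) CARD('m) CARD('n) pu pw d) xs
     \<longleftrightarrow> xs ! pu \<noteq> 0 \<and> xs ! pw \<in> Wset G a y (1 / xs ! pu)"
proof -
  have "sat (inW {coords x @ coords v | x v. (x, v) \<in> G} (coords a) (coords y) CARD('m) CARD('n) pu pw d) xs
     \<longleftrightarrow> (\<exists>t. t * xs ! pu = 1 \<and> (\<exists>x v. (x, v) \<in> G \<and> dist x a \<le> 1 \<and> dist v y \<le> 1 \<and> (\<forall>x'. (x', y) \<in> G \<longrightarrow> t \<le> dist x x')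
         \<and> xs ! pw = dist v y))"
    unfolding sat_inW[OF xs pu pw] sq_le1[OF zero_le_dist] tt_le[OF zero_le_dist] ww_eq[OF zero_le_dist] ..
  also have "\<dots> \<longleftrightarrow> xs ! pu \<noteq> 0 \<and> xs ! pw \<in> Wset G a y (1 / xs ! pu)"
  proof
    assume "\<exists>t. t * xs ! pu = 1 \<and> (\<exists>x v. (x, v) \<in> G \<and> dist x a \<le> 1 \<and> dist v y \<le> 1 \<and> (\<forall>x'. (x', y) \<in> G \<longrightarrow> t \<le> dist x x')
         \<and> xs ! pw = dist v y)"
    then obtain t where t: "t * xs ! pu = 1" and ex: "\<exists>x v. (x, v) \<in> G \<and> dist x a \<le> 1 \<and> dist v y \<le> 1 \<and> (\<forall>x'. (x', y) \<in> G \<longrightarrow> t \<le> dist x x')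
         \<and> xs ! pw = dist v y" by blast
    have nz: "xs ! pu \<noteq> 0" using t by auto
    hence "t = 1 / xs ! pu" using t by (simp add: field_simps)
    thus "xs ! pu \<noteq> 0 \<and> xs ! pw \<in> Wset G a y (1 / xs ! pu)" using nz ex unfolding Wset_def by blast
  next
    assume h: "xs ! pu \<noteq> 0 \<and> xs ! pw \<in> Wset G a y (1 / xs ! pu)"
    hence "(1 / xs ! pu) * xs ! pu = 1" by simp
    thus "\<exists>t. t * xs ! pu = 1 \<and> (\<exists>x v. (x, v) \<in> G \<and> dist x a \<le> 1 \<and> dist v y \<le> 1 \<and> (\<forall>x'. (x', y) \<in> G \<longrightarrow> t \<le> dist x x')
         \<and> xs ! pw = dist v y)" using h unfolding Wset_def by blast
  qed
  finally show ?thesis .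
qed

lemma Wset_nonneg: "w \<in> Wset G a y t \<Longrightarrow> 0 \<le> w"
  unfolding Wset_def by auto

lemma Wset_bdd: "bdd_below (Wset G a y t)"
  unfolding bdd_below_def using Wset_nonneg by blast

lemma Wset_mono: "t \<le> t' \<Longrightarrow> Wset G a y t' \<subseteq> Wset G a y t"
  unfolding Wset_def by (auto intro: order_trans)

lemma Wset_pos:
  fixes G :: "((real ^ ('m::{finite,linorder})) \<times> (real ^ ('n::{finite,linorder}))) set"
  assumes cl: "closed G" and t: "0 < t" and ne: "Wset G a y t \<noteq> {}"
  shows "\<exists>m>0. \<forall>w\<in>Wset G a y t. m \<le> w"
proof -
  define K where "K = G \<inter> (cball a 1 \<times> cball y 1) \<inter> (\<Inter>x'\<in>{x'. (x', y) \<in> G}. {p. t \<le> dist (fst p) x'})"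
  have clK: "closed K" unfolding K_def
  proof (intro closed_Int cl closed_Times closed_cball closed_INT ballI)
    fix x' show "closed {p :: (real ^ ('m::{finite,linorder})) \<times> (real ^ ('n::{finite,linorder})). t \<le> dist (fst p) x'}"
      by (intro closed_Collect_le continuous_intros)
  qed
  have bK: "bounded K" unfolding K_def
    by (rule bounded_subset[OF bounded_Times[OF bounded_cball bounded_cball]]) auto
  have cK: "compact K" using clK bK by (simp add: compact_eq_bounded_closed)
  have WK: "Wset G a y t = (\<lambda>p. dist (snd p) y) ` K"
  proof (rule set_eqI, rule iffI)
    fix w assume "w \<in> Wset G a y t"
    then obtain x v where xv: "(x, v) \<in> G" "dist x a \<le> 1" "dist v y \<le> 1" "\<forall>x'. (x', y) \<in> G \<longrightarrow> t \<le> dist x x'" "w = dist v y"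
      unfolding Wset_def by blast
    have "(x, v) \<in> K" unfolding K_def using xv by (simp add: dist_commute)
    thus "w \<in> (\<lambda>p. dist (snd p) y) ` K" using xv(5) by (intro image_eqI[where x="(x, v)"]) simp_all
  next
    fix w assume "w \<in> (\<lambda>p. dist (snd p) y) ` K"
    then obtain x v where xv: "(x, v) \<in> K" "w = dist v y" by auto
    hence "(x, v) \<in> G" "dist x a \<le> 1" "dist v y \<le> 1" "\<forall>x'. (x', y) \<in> G \<longrightarrow> t \<le> dist x x'"
      unfolding K_def by (auto simp: dist_commute)
    thus "w \<in> Wset G a y t" unfolding Wset_def using xv(2) by blast
  qed
  have neK: "K \<noteq> {}" using ne WK by auto
  have "continuous_on K (\<lambda>p. dist (snd p) y)" by (intro continuous_intros)
  then obtain p where p: "p \<in> K" and pmin: "\<forall>q\<in>K. dist (snd p) y \<le> dist (snd q) y"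
    using continuous_attains_inf[OF cK neK] by blast
  have "dist (snd p) y > 0"
  proof (rule ccontr)
    assume "\<not> dist (snd p) y > 0"
    hence "snd p = y" by simp
    hence "(fst p, y) \<in> G" using p unfolding K_def by (cases p) auto
    hence "t \<le> dist (fst p) (fst p)" using p unfolding K_def by blast
    thus False using t by simp
  qed
  moreover have "\<forall>w\<in>Wset G a y t. dist (snd p) y \<le> w" unfolding WK using pmin by blast
  ultimately show ?thesis by blast
qed

lemma isinf_char:
  fixes W :: "real set"
  assumes ne: "W \<noteq> {}" and bdd: "bdd_below W"
  shows "((\<forall>w\<in>W. c \<le> w) \<and> (\<forall>e>0. \<exists>w\<in>W. w < c + e)) \<longleftrightarrow> c = Inf W"
proof
  assume h: "(\<forall>w\<in>W. c \<le> w) \<and> (\<forall>e>0. \<exists>w\<in>W. w < c + e)"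
  have "c \<le> Inf W" using h ne by (intro cInf_greatest) auto
  moreover have "\<not> Inf W > c"
  proof
    assume "Inf W > c"
    then obtain w where "w \<in> W" "w < c + (Inf W - c)" using h by (meson diff_gt_0_iff_gt)
    hence "w < Inf W" "Inf W \<le> w" using cInf_lower[OF _ bdd] by auto
    thus False by simp
  qed
  ultimately show "c = Inf W" by simp
next
  assume c: "c = Inf W"
  show "(\<forall>w\<in>W. c \<le> w) \<and> (\<forall>e>0. \<exists>w\<in>W. w < c + e)"
  proof
    show "\<forall>w\<in>W. c \<le> w" using c cInf_lower[OF _ bdd] by auto
    show "\<forall>e>0. \<exists>w\<in>W. w < c + e"
    proof (intro allI impI)
      fix e :: real assume "0 < e"
      hence "Inf W < c + e" using c by simp
      thus "\<exists>w\<in>W. w < c + e" using cInf_less_iff[OF ne bdd] by blast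
    qed
  qed
qed


definition "Pf GL ca cy M N = Cj (Lt (Cs 0) (V 0)) (Ex (inW GL ca cy M N 0 2 3))"
definition "IsInfF GL ca cy M N = Cj (Fa (Imp (inW GL ca cy M N 0 3 4) (Le (V 2) (V 3))))
   (Fa (Imp (Lt (Cs 0) (V 3)) (Ex (Cj (inW GL ca cy M N 0 4 5) (Lt (V 4) (Pl (V 2) (V 3)))))))"
definition "Hf GL ca cy M N = Dj (Cj (Pf GL ca cy M N) (Ex (Cj (Eq (Ml (V 2) (V 1)) (Cs 1)) (IsInfF GL ca cy M N))))
   (Cj (Ng (Pf GL ca cy M N)) (Eq (V 1) (Cs 0)))"

lemma wf_Hf: "GL \<in> S (M + N) \<Longrightarrow> wf S 2 (Hf GL ca cy M N)"
  unfolding Hf_def Pf_def IsInfF_def by (simp add: wf_inW)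

definition hfun :: "((real ^ ('m::{finite,linorder})) \<times> (real ^ ('n::{finite,linorder}))) set \<Rightarrow> real ^ ('m::{finite,linorder}) \<Rightarrow> real ^ ('n::{finite,linorder}) \<Rightarrow> real \<Rightarrow> real" where
  "hfun G a y u = (if 0 < u \<and> Wset G a y (1 / u) \<noteq> {} then 1 / Inf (Wset G a y (1 / u)) else 0)"

context
  fixes G :: "((real ^ ('m::{finite,linorder})) \<times> (real ^ ('n::{finite,linorder}))) set"
    and a :: "real ^ ('m::{finite,linorder})" and y :: "real ^ ('n::{finite,linorder})"
begin

abbreviation "GLs \<equiv> {coords x @ coords v | x v. (x, v) \<in> G}"

lemma sat_Pf: "sat (Pf GLs (coords a) (coords y) CARD('m) CARD('n)) [u, s] \<longleftrightarrow> 0 < u \<and> Wset G a y (1 / u) \<noteq> {}"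
proof -
  have "sat (Pf GLs (coords a) (coords y) CARD('m) CARD('n)) [u, s] \<longleftrightarrow> 0 < u \<and> (\<exists>w. u \<noteq> 0 \<and> w \<in> Wset G a y (1 / u))"
    unfolding Pf_def sat.simps teval.simps using sat_inW_W[where G=G and a=a and y=y and d=3 and pu=0 and pw=2] by simp
  thus ?thesis by auto
qed

lemma sat_IsInf: "0 < u \<Longrightarrow> sat (IsInfF GLs (coords a) (coords y) CARD('m) CARD('n)) [u, s, c] \<longleftrightarrow>
   (\<forall>w\<in>Wset G a y (1 / u). c \<le> w) \<and> (\<forall>e>0. \<exists>w\<in>Wset G a y (1 / u). w < c + e)"
proof -
  assume u: "0 < u"
  have e1: "sat (inW GLs (coords a) (coords y) CARD('m) CARD('n) 0 3 4) [u, s, c, w] \<longleftrightarrow> w \<in> Wset G a y (1 / u)" for w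
    using sat_inW_W[where G=G and a=a and y=y and d=4 and pu=0 and pw=3 and xs="[u, s, c, w]"] u by simp
  have e2: "sat (inW GLs (coords a) (coords y) CARD('m) CARD('n) 0 4 5) [u, s, c, e, w] \<longleftrightarrow> w \<in> Wset G a y (1 / u)" for e w
    using sat_inW_W[where G=G and a=a and y=y and d=5 and pu=0 and pw=4 and xs="[u, s, c, e, w]"] u by simp
  show ?thesis unfolding IsInfF_def sat.simps sat_All sat_Imp sat_Le teval.simps using e1 e2 by (simp add: Ball_def Bex_def)
qed

lemma sat_Hf:
  assumes cl: "closed G"
  shows "sat (Hf GLs (coords a) (coords y) CARD('m) CARD('n)) [u, s] \<longleftrightarrow> s = hfun G a y u"
proof (cases "0 < u \<and> Wset G a y (1 / u) \<noteq> {}")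
  case True
  hence u: "0 < u" and ne: "Wset G a y (1 / u) \<noteq> {}" by auto
  obtain m where m: "m > 0" "\<forall>w\<in>Wset G a y (1 / u). m \<le> w" using Wset_pos[OF cl _ ne] u by auto
  have Ipos: "Inf (Wset G a y (1 / u)) > 0"
    using cInf_greatest[OF ne, of m] m by simp
  have "sat (Hf GLs (coords a) (coords y) CARD('m) CARD('n)) [u, s] \<longleftrightarrow>
      (\<exists>c. c * s = 1 \<and> (\<forall>w\<in>Wset G a y (1 / u). c \<le> w) \<and> (\<forall>e>0. \<exists>w\<in>Wset G a y (1 / u). w < c + e))"
    unfolding Hf_def sat.simps teval.simps sat_Pf using True sat_IsInf[OF u] by simp
  also have "\<dots> \<longleftrightarrow> (\<exists>c. c * s = 1 \<and> c = Inf (Wset G a y (1 / u)))"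
    using isinf_char[OF ne Wset_bdd] by simp
  also have "\<dots> \<longleftrightarrow> s = 1 / Inf (Wset G a y (1 / u))"
    using Ipos by (auto simp: field_simps)
  finally show ?thesis unfolding hfun_def using True by simp
next
  case False
  show ?thesis unfolding Hf_def sat.simps teval.simps sat_Pf hfun_def using False by auto
qed

end


lemma key_bound:
  fixes I d :: real and N :: nat
  assumes I: "0 < I" and d: "0 < d" and h: "\<bar>1 / I\<bar> \<le> (1 / d) ^ N"
  shows "d ^ N \<le> I"
proof -
  have "1 / I \<le> 1 / d ^ N" using h I by (simp add: power_one_over)
  thus ?thesis using I d by (simp add: field_simps)
qed

theorem mainTheorem5:
  fixes S :: "nat \<Rightarrow> real list set set"
    and G :: "((real ^ ('m::{finite,linorder})) \<times> (real ^ ('n::{finite,linorder}))) set"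
    and a :: "real ^ ('m::{finite,linorder})" and y :: "real ^ ('n::{finite,linorder})"
  assumes "polynomially_bounded S"
    and "definable_graph S G"
    and "closed G"
    and "(a, y) \<in> G"
  shows "\<exists>U C l. open U \<and> (a, y) \<in> U \<and> C > 0 \<and> l > 0 \<and>
           (\<forall>x v. (x, v) \<in> G \<inter> U \<longrightarrow>
              norm (v - y) \<ge> C * (infdist x {x'. (x', y) \<in> G}) powr l)"
proof -
  have pb: "polynomially_bounded S" and cl: "closed G" and ay: "(a, y) \<in> G" using assms by auto
  have strS: "str S" using pb unfolding polynomially_bounded_def o_minimal_def str_def by blast
  have GLS: "{coords x @ coords v | x v. (x, v) \<in> G} \<in> S (CARD('m) + CARD('n))"
    using assms(2) unfolding definable_graph_def .
  let ?H = "Hf {coords x @ coords v | x v. (x, v) \<in> G} (coords a) (coords y) CARD('m) CARD('n)"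
  have dH: "dfn S 2 (sat ?H)" by (rule str.sat_dfn[OF strS wf_Hf[where S=S and M="CARD('m)" and N="CARD('n)", OF GLS]])
  have seteq: "{[x, hfun G a y x] | x. True} = {xs. length xs = 2 \<and> sat ?H xs}"
  proof (rule set_eqI, rule iffI)
    fix xs assume "xs \<in> {[x, hfun G a y x] | x. True}"
    then obtain u where u: "xs = [u, hfun G a y u]" by blast
    show "xs \<in> {xs. length xs = 2 \<and> sat ?H xs}" unfolding u using sat_Hf[OF cl, of a y u "hfun G a y u"] by simp
  next
    fix xs assume "xs \<in> {xs. length xs = 2 \<and> sat ?H xs}"
    hence l: "length xs = 2" and s: "sat ?H xs" by auto
    obtain u w where e: "xs = [u, w]" using str.len2[OF strS l] by blast
    have "w = hfun G a y u" using s sat_Hf[OF cl, of a y u w] unfolding e by simp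
    thus "xs \<in> {[x, hfun G a y x] | x. True}" unfolding e by blast
  qed
  have "{[x, hfun G a y x] | x. True} \<in> S 2" using dH unfolding dfn_def seteq .
  then obtain N0 :: nat and x0 :: real where pbd: "\<forall>x > x0. \<bar>hfun G a y x\<bar> \<le> x ^ N0"
    using pb unfolding polynomially_bounded_def by blast
  define T where "T = 1 / (max x0 0 + 1)"
  have T0: "0 < T" and T1: "T \<le> 1" unfolding T_def by (auto simp: field_simps)
  define C where "C = (if Wset G a y T \<noteq> {} then min 1 (Inf (Wset G a y T)) else 1)"
  have C0: "0 < C"
  proof (cases "Wset G a y T \<noteq> {}")
    case True
    obtain m where m: "m > 0" "\<forall>w\<in>Wset G a y T. m \<le> w" using Wset_pos[OF cl T0 True] by auto
    have "Inf (Wset G a y T) > 0" using cInf_greatest[OF True, of m] m by simp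
    thus ?thesis unfolding C_def using True by simp
  qed (simp add: C_def)
  have C1: "C \<le> 1" unfolding C_def by simp
  define l :: real where "l = real (Suc N0)"
  have l0: "0 < l" unfolding l_def by simp
  define U where "U = ball a 1 \<times> ball y 1"
  have "open U" unfolding U_def by (intro open_Times open_ball)
  moreover have "(a, y) \<in> U" unfolding U_def by simp
  moreover have "\<forall>x v. (x, v) \<in> G \<inter> U \<longrightarrow> norm (v - y) \<ge> C * (infdist x {x'. (x', y) \<in> G}) powr l"
  proof (intro allI impI)
    fix x v assume xv: "(x, v) \<in> G \<inter> U"
    hence g: "(x, v) \<in> G" and xa: "dist x a < 1" and vy: "dist v y < 1"
      unfolding U_def by (auto simp: dist_commute)
    define \<delta> where "\<delta> = infdist x {x'. (x', y) \<in> G}"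
    have d0: "0 \<le> \<delta>" unfolding \<delta>_def by (rule infdist_nonneg)
    have dle: "\<forall>x'. (x', y) \<in> G \<longrightarrow> \<delta> \<le> dist x x'" unfolding \<delta>_def by (auto intro: infdist_le)
    have d1: "\<delta> < 1" using dle ay xa by (force simp: dist_commute)
    have nv: "norm (v - y) = dist v y" by (simp add: dist_norm)
    have inW: "dist v y \<in> Wset G a y \<delta>" unfolding Wset_def using g xa vy dle by force
    show "norm (v - y) \<ge> C * \<delta> powr l"
    proof (cases "\<delta> = 0")
      case True thus ?thesis using l0 by simp
    next
      case False
      hence dpos: "0 < \<delta>" using d0 by simp
      have pw: "\<delta> powr l = \<delta> ^ Suc N0" unfolding l_def using dpos by (rule powr_realpow)
      have ple1: "\<delta> ^ Suc N0 \<le> 1" by (rule power_le_one) (use d0 d1 in auto)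
      show ?thesis
      proof (cases "\<delta> < T")
        case True
        define u where "u = 1 / \<delta>"
        have u0: "0 < u" unfolding u_def using dpos by simp
        have ux: "u > x0"
        proof -
          have "max x0 0 + 1 < 1 / \<delta>" using True dpos unfolding T_def
            by (simp add: field_simps)
          thus ?thesis unfolding u_def by simp
        qed
        have invu: "1 / u = \<delta>" unfolding u_def by simp
        have ne: "Wset G a y \<delta> \<noteq> {}" using inW by blast
        obtain m where m: "m > 0" "\<forall>w\<in>Wset G a y \<delta>. m \<le> w" using Wset_pos[OF cl dpos ne] by auto
        have Ipos: "Inf (Wset G a y \<delta>) > 0" using cInf_greatest[OF ne, of m] m by simp
        have hu: "hfun G a y u = 1 / Inf (Wset G a y \<delta>)" unfolding hfun_def invu using u0 ne by simp
        have "\<bar>1 / Inf (Wset G a y \<delta>)\<bar> \<le> (1 / \<delta>) ^ N0" using pbd ux hu unfolding u_def by metis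
        hence b1: "\<delta> ^ N0 \<le> Inf (Wset G a y \<delta>)" by (rule key_bound[OF Ipos dpos])
        have b2: "Inf (Wset G a y \<delta>) \<le> dist v y" by (rule cInf_lower[OF inW Wset_bdd])
        have "\<delta> ^ Suc N0 \<le> \<delta> ^ N0" using dpos d1 by (simp add: power_decreasing)
        hence "C * \<delta> ^ Suc N0 \<le> \<delta> ^ N0" using C1 C0 ple1 dpos
          by (meson less_eq_real_def mult_left_le_one_le order_trans zero_le_power)
        thus ?thesis unfolding pw nv using b1 b2 by linarith
      next
        case False
        hence inT: "dist v y \<in> Wset G a y T" using Wset_mono[of T \<delta> G a y] inW by auto
        hence neT: "Wset G a y T \<noteq> {}" by blast
        have "C \<le> Inf (Wset G a y T)" unfolding C_def using neT by simp
        also have "\<dots> \<le> dist v y" by (rule cInf_lower[OF inT Wset_bdd])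
        finally have "C \<le> dist v y" .
        moreover have "C * \<delta> ^ Suc N0 \<le> C" using C0 ple1 by (simp add: mult_left_le)
        ultimately show ?thesis unfolding pw nv by linarith
      qed
    qed
  qed
  ultimately show ?thesis using C0 l0 by blast
qed


end
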